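(* Let $\mathcal A\subseteq\mathrm{Mat}(\mathbb{Z}^D,p)$ be a VS $*$-subalgebra with range $\ell$, and let $S\subseteq\mathbb{Z}^D$ be any set of sites. Then every central element $z$ of $\mathcal A\cap\mathrm{Mat}(S,p)$ is supported on $(\mathbb{Z}^D\setminus S)^{+2\ell}\cap S$.
   Context: For $p:\mathbb{Z}^D\to\mathbb{Z}_{>0}$ and finite $F$, $\mathrm{Mat}(F,p)=\bigotimes_{s\in F}M_{p(s)}(\mathbb{C})$ with embeddings by tensoring identities; $\mathrm{Mat}(\mathbb{Z}^D,p)$ is the union, and for arbitrary $S$, $\mathrm{Mat}(S,p)$ is the union of $\mathrm{Mat}(F,p)$ over finite $F\subseteq S$. $\mathrm{Supp}(x)$ is the smallest finite set $F$ with $x\in\mathrm{Mat}(F,p)$ (empty for scalars); "supported on $T$" means $\mathrm{Supp}(x)\subseteq T$. $T^{+\ell}$ is the set of sites at $\ell_\infty$-distance at most $\ell$ from $T$. A $*$-subalgebra $\mathcal A$ is VS with range $\ell>0$ if for every $a\in\mathcal A\setminus\mathbb{C}\mathbf 1$ and every $s\in\mathrm{Supp}(a)$ there is $w\in\mathcal A\cap\mathrm{Mat}(\{s\}^{+\ell},p)$ with $[a,w]\ne0$. *)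

theory Defs
  imports Complex_Main
begin

text \<open>Sites of the lattice Z^D are functions 'd => int for a finite (nonempty) index
type 'd, so D = CARD('d).
Mat(Z^D,p) is modelled concretely: an element of Mat(F,p) (F finite) is identified with
the kernel on global configurations (sigma s < p s for all s) given by
  k sigma tau = m (sigma|F) (tau|F)  if sigma, tau agree off F, and 0 otherwise,
i.e. x tensor identity. This is an injective *-homomorphic image of the inductive limit,
compatible with the embeddings by tensoring identities.\<close>

type_synonym 'd site = "'d \<Rightarrow> int"
type_synonym 'd cfg = "'d site \<Rightarrow> nat"
type_synonym 'd op = "'d cfg \<Rightarrow> 'd cfg \<Rightarrow> complex"

definition cfgs :: "('d site \<Rightarrow> nat) \<Rightarrow> 'd cfg set" where
  "cfgs p = {\<sigma>. \<forall>s. \<sigma> s < p s}"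

definition restr :: "'d cfg \<Rightarrow> 'd site set \<Rightarrow> 'd cfg" where
  "restr \<sigma> F = (\<lambda>s. if s \<in> F then \<sigma> s else 0)"

definition MatF :: "('d site \<Rightarrow> nat) \<Rightarrow> 'd site set \<Rightarrow> 'd op set" where
  "MatF p F = {k. \<exists>m :: 'd cfg \<Rightarrow> 'd cfg \<Rightarrow> complex. \<forall>\<sigma> \<tau>.
      k \<sigma> \<tau> = (if \<sigma> \<in> cfgs p \<and> \<tau> \<in> cfgs p \<and> (\<forall>s. s \<notin> F \<longrightarrow> \<sigma> s = \<tau> s)
                 then m (restr \<sigma> F) (restr \<tau> F) else 0)}"

definition Mat :: "('d site \<Rightarrow> nat) \<Rightarrow> 'd site set \<Rightarrow> 'd op set" where
  "Mat p S = (\<Union>F\<in>{F. finite F \<and> F \<subseteq> S}. MatF p F)"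

text \<open>Algebra operations on kernels (the sum is finite for local kernels).\<close>
definition opmult :: "('d site \<Rightarrow> nat) \<Rightarrow> 'd op \<Rightarrow> 'd op \<Rightarrow> 'd op" where
  "opmult p a b = (\<lambda>\<sigma> \<tau>. \<Sum>\<rho>\<in>{\<rho>\<in>cfgs p. a \<sigma> \<rho> \<noteq> 0}. a \<sigma> \<rho> * b \<rho> \<tau>)"

definition opadj :: "'d op \<Rightarrow> 'd op" where
  "opadj a = (\<lambda>\<sigma> \<tau>. cnj (a \<tau> \<sigma>))"

definition opadd :: "'d op \<Rightarrow> 'd op \<Rightarrow> 'd op" where
  "opadd a b = (\<lambda>\<sigma> \<tau>. a \<sigma> \<tau> + b \<sigma> \<tau>)"

definition opscale :: "complex \<Rightarrow> 'd op \<Rightarrow> 'd op" where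
  "opscale c a = (\<lambda>\<sigma> \<tau>. c * a \<sigma> \<tau>)"

definition opzero :: "'d op" where
  "opzero = (\<lambda>\<sigma> \<tau>. 0)"

definition commutator :: "('d site \<Rightarrow> nat) \<Rightarrow> 'd op \<Rightarrow> 'd op \<Rightarrow> 'd op" where
  "commutator p a b = (\<lambda>\<sigma> \<tau>. opmult p a b \<sigma> \<tau> - opmult p b a \<sigma> \<tau>)"

definition scalars :: "('d site \<Rightarrow> nat) \<Rightarrow> 'd op set" where
  "scalars p = MatF p {}"

definition Supp :: "('d site \<Rightarrow> nat) \<Rightarrow> 'd op \<Rightarrow> 'd site set" where
  "Supp p x = (THE F. finite F \<and> x \<in> MatF p F \<and>
                      (\<forall>G. finite G \<and> x \<in> MatF p G \<longrightarrow> F \<subseteq> G))"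

definition dinf :: "('d::finite) site \<Rightarrow> 'd site \<Rightarrow> int" where
  "dinf s t = Max (range (\<lambda>i. \<bar>s i - t i\<bar>))"

definition thicken :: "('d::finite) site set \<Rightarrow> real \<Rightarrow> 'd site set" where
  "thicken T l = {t. \<exists>u\<in>T. real_of_int (dinf t u) \<le> l}"

definition star_subalgebra :: "('d site \<Rightarrow> nat) \<Rightarrow> 'd op set \<Rightarrow> bool" where
  "star_subalgebra p A \<longleftrightarrow> A \<subseteq> Mat p UNIV \<and> opzero \<in> A \<and>
     (\<forall>a\<in>A. \<forall>b\<in>A. opadd a b \<in> A \<and> opmult p a b \<in> A) \<and>
     (\<forall>c. \<forall>a\<in>A. opscale c a \<in> A) \<and> (\<forall>a\<in>A. opadj a \<in> A)"

definition VS :: "('d::finite site \<Rightarrow> nat) \<Rightarrow> 'd op set \<Rightarrow> real \<Rightarrow> bool" where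
  "VS p A l \<longleftrightarrow> star_subalgebra p A \<and> l > 0 \<and>
     (\<forall>a\<in>A - scalars p. \<forall>s\<in>Supp p a.
        \<exists>w\<in>A \<inter> Mat p (thicken {s} l). commutator p a w \<noteq> opzero)"

end

theory Submission
  imports Defs
begin

lemma MatF_inter:
  assumes p: "\<forall>s. p s > 0" and kF: "k \<in> MatF p F" and kG: "k \<in> MatF p G"
  shows "k \<in> MatF p (F \<inter> G)"
proof -
  obtain m where m: "\<And>\<sigma> \<tau>. k \<sigma> \<tau> = (if \<sigma> \<in> cfgs p \<and> \<tau> \<in> cfgs p \<and> (\<forall>s. s \<notin> F \<longrightarrow> \<sigma> s = \<tau> s)
                 then m (restr \<sigma> F) (restr \<tau> F) else 0)"
    using kF unfolding MatF_def by blast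
  obtain m' where m': "\<And>\<sigma> \<tau>. k \<sigma> \<tau> = (if \<sigma> \<in> cfgs p \<and> \<tau> \<in> cfgs p \<and> (\<forall>s. s \<notin> G \<longrightarrow> \<sigma> s = \<tau> s)
                 then m' (restr \<sigma> G) (restr \<tau> G) else 0)"
    using kG unfolding MatF_def by blast
  have rc: "\<And>\<sigma> H. \<sigma> \<in> cfgs p \<Longrightarrow> restr \<sigma> H \<in> cfgs p"
    using p unfolding cfgs_def restr_def by auto
  have rr: "\<And>\<sigma> H K. restr (restr \<sigma> H) K = restr \<sigma> (H \<inter> K)"
    unfolding restr_def by auto
  have rrs: "\<And>\<sigma> H. restr (restr \<sigma> H) H = restr \<sigma> H"
    unfolding restr_def by auto
  have main: "\<forall>\<sigma> \<tau>. k \<sigma> \<tau> = (if \<sigma> \<in> cfgs p \<and> \<tau> \<in> cfgs p \<and> (\<forall>s. s \<notin> F \<inter> G \<longrightarrow> \<sigma> s = \<tau> s)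
                 then k (restr \<sigma> (F \<inter> G)) (restr \<tau> (F \<inter> G)) else 0)"
  proof (intro allI)
    fix \<sigma> \<tau>
    show "k \<sigma> \<tau> = (if \<sigma> \<in> cfgs p \<and> \<tau> \<in> cfgs p \<and> (\<forall>s. s \<notin> F \<inter> G \<longrightarrow> \<sigma> s = \<tau> s)
                 then k (restr \<sigma> (F \<inter> G)) (restr \<tau> (F \<inter> G)) else 0)"
    proof (cases "\<sigma> \<in> cfgs p \<and> \<tau> \<in> cfgs p \<and> (\<forall>s. s \<notin> F \<inter> G \<longrightarrow> \<sigma> s = \<tau> s)")
      case True
      then have c: "\<sigma> \<in> cfgs p" "\<tau> \<in> cfgs p" and ag: "\<forall>s. s \<notin> F \<inter> G \<longrightarrow> \<sigma> s = \<tau> s" by auto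
      have a1: "\<forall>s. s \<notin> F \<longrightarrow> \<sigma> s = \<tau> s" using ag by auto
      have a2: "\<forall>s. s \<notin> F \<longrightarrow> restr \<sigma> F s = restr \<tau> F s" unfolding restr_def by auto
      have a3: "\<forall>s. s \<notin> G \<longrightarrow> restr \<sigma> F s = restr \<tau> F s" using ag unfolding restr_def by auto
      have a4: "\<forall>s. s \<notin> G \<longrightarrow> restr \<sigma> (F \<inter> G) s = restr \<tau> (F \<inter> G) s" unfolding restr_def by auto
      have "k \<sigma> \<tau> = m (restr \<sigma> F) (restr \<tau> F)" using m[of \<sigma> \<tau>] c a1 by simp
      also have "\<dots> = k (restr \<sigma> F) (restr \<tau> F)"
        using m[of "restr \<sigma> F" "restr \<tau> F"] rc[OF c(1)] rc[OF c(2)] a2 by (simp add: rrs)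
      also have "\<dots> = m' (restr \<sigma> (F \<inter> G)) (restr \<tau> (F \<inter> G))"
        using m'[of "restr \<sigma> F" "restr \<tau> F"] rc[OF c(1)] rc[OF c(2)] a3 by (simp add: rr)
      also have "\<dots> = k (restr \<sigma> (F \<inter> G)) (restr \<tau> (F \<inter> G))"
        using m'[of "restr \<sigma> (F \<inter> G)" "restr \<tau> (F \<inter> G)"] rc[OF c(1)] rc[OF c(2)] a4
        by (simp add: rr Int_assoc)
      finally show ?thesis using True by simp
    next
      case False
      then have "\<not> (\<sigma> \<in> cfgs p \<and> \<tau> \<in> cfgs p) \<or> (\<exists>s. s \<notin> F \<and> \<sigma> s \<noteq> \<tau> s) \<or> (\<exists>s. s \<notin> G \<and> \<sigma> s \<noteq> \<tau> s)"
        by auto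
      then have "k \<sigma> \<tau> = 0"
      proof (elim disjE exE conjE)
        assume "\<not> (\<sigma> \<in> cfgs p \<and> \<tau> \<in> cfgs p)" then show ?thesis using m[of \<sigma> \<tau>] by auto
      next
        fix s assume "s \<notin> F" "\<sigma> s \<noteq> \<tau> s" then show ?thesis using m[of \<sigma> \<tau>] by metis
      next
        fix s assume "s \<notin> G" "\<sigma> s \<noteq> \<tau> s" then show ?thesis using m'[of \<sigma> \<tau>] by metis
      qed
      then show ?thesis using False by (simp only: if_False)
    qed
  qed
  then show ?thesis unfolding MatF_def by blast
qed

lemma Supp_le:
  assumes p: "\<forall>s. p s > 0" and f: "finite F" and z: "z \<in> MatF p F"
  shows "Supp p z \<subseteq> F"
proof -
  obtain F0 where F0: "finite F0 \<and> z \<in> MatF p F0"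
    and mn: "\<And>G. finite G \<and> z \<in> MatF p G \<Longrightarrow> card F0 \<le> card G"
    using ex_has_least_nat[of "\<lambda>G. finite G \<and> z \<in> MatF p G" F card] f z by blast
  have least: "\<forall>G. finite G \<and> z \<in> MatF p G \<longrightarrow> F0 \<subseteq> G"
  proof (intro allI impI)
    fix G assume G: "finite G \<and> z \<in> MatF p G"
    have "z \<in> MatF p (F0 \<inter> G)" using MatF_inter[OF p] F0 G by blast
    then have "card F0 \<le> card (F0 \<inter> G)" using mn F0 by simp
    then have "F0 \<inter> G = F0" using F0 card_seteq[of F0 "F0 \<inter> G"] by auto
    then show "F0 \<subseteq> G" by blast
  qed
  have "Supp p z = F0"
    unfolding Supp_def
    apply (rule the_equality)
    using F0 least apply blast
    using F0 least by blast
  then show ?thesis using least f z by blast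
qed

theorem lemma2p3:
  fixes p :: "('d::finite) site \<Rightarrow> nat" and A :: "'d op set" and l :: real
    and S :: "'d site set" and z :: "'d op"
  assumes "\<forall>s. p s > 0"
    and "VS p A l"
    and "z \<in> A \<inter> Mat p S"
    and "\<forall>w\<in>A \<inter> Mat p S. commutator p z w = opzero"
  shows "Supp p z \<subseteq> thicken (UNIV - S) (2 * l) \<inter> S"
proof
  fix s assume s: "s \<in> Supp p z"
  obtain F where F: "finite F" "F \<subseteq> S" "z \<in> MatF p F"
    using assms(3) unfolding Mat_def by blast
  have sS: "s \<in> S" using Supp_le[OF assms(1) F(1) F(3)] F(2) s by blast
  have ns: "z \<notin> scalars p"
  proof
    assume "z \<in> scalars p"
    then have "Supp p z \<subseteq> {}" using Supp_le[OF assms(1)] unfolding scalars_def by blast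
    then show False using s by blast
  qed
  have l: "l > 0" using assms(2) unfolding VS_def by blast
  obtain w where w: "w \<in> A" "w \<in> Mat p (thicken {s} l)" "commutator p z w \<noteq> opzero"
    using assms(2) assms(3) ns s unfolding VS_def by blast
  have "\<not> thicken {s} l \<subseteq> S"
  proof
    assume "thicken {s} l \<subseteq> S"
    then have "w \<in> Mat p S" using w(2) unfolding Mat_def by blast
    then show False using w assms(4) by blast
  qed
  then obtain t where t: "t \<notin> S" "real_of_int (dinf t s) \<le> l"
    unfolding thicken_def by blast
  have "dinf s t = dinf t s" unfolding dinf_def by (simp add: abs_minus_commute)
  then have "real_of_int (dinf s t) \<le> 2 * l" using t l by simp
  then have "s \<in> thicken (UNIV - S) (2 * l)" unfolding thicken_def using t by blast
  then show "s \<in> thicken (UNIV - S) (2 * l) \<inter> S" using sS by blast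
qed

end
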